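(* If $x\in S_n$ avoids both $123$ and the bivincular pattern $132^{\star}$, then $x\in\mathrm{Sort}_n(132,321)$.
   Context: An occurrence of the bivincular pattern $132^{\star}$ in $x=x_1\cdots x_n$ is a pair of indices $a<b<n$ with $x_a<x_{b+1}$ and $x_b=x_{b+1}+1$. A permutation contains a classical pattern $p$ if it has a subsequence order-isomorphic to $p$. For a set $T$ of patterns, the map $s_T$ is defined as follows: the entries of the input permutation are read from left to right, with an initially empty stack. At each step, if the input is nonempty and pushing the next input entry onto the stack produces a stack whose contents, read from top to bottom, avoid every pattern in $T$, that entry is pushed; otherwise the top entry of the stack is popped and appended to the output. When the input is exhausted, the remaining stack entries are popped one at a time to the output. Write $s_{\sigma,\tau}=s_{\{\sigma,\tau\}}$ and $s=s_{\{21\}}$ (West's stack-sorting map). $\mathrm{Sort}_n(\sigma,\tau)$ is the set of $x\in S_n$ with $s(s_{\sigma,\tau}(x))=12\cdots n$. *)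

theory Defs
  imports Main
begin

text \<open>Permutations are lists of naturals; x is in S_n iff it is an arrangement of 1..n.
  Positions are 0-based in Isabelle (x ! i is the paper's x_(i+1)).\<close>

definition perm_of :: "nat \<Rightarrow> nat list \<Rightarrow> bool" where
  "perm_of n x \<longleftrightarrow> distinct x \<and> set x = {1..n}"

definition order_iso :: "nat list \<Rightarrow> nat list \<Rightarrow> bool" where
  "order_iso a b \<longleftrightarrow> length a = length b \<and>
     (\<forall>i<length a. \<forall>j<length a. a ! i < a ! j \<longleftrightarrow> b ! i < b ! j)"

definition contains :: "nat list \<Rightarrow> nat list \<Rightarrow> bool" where
  "contains x p \<longleftrightarrow> (\<exists>I. I \<subseteq> {..<length x} \<and> order_iso (nths x I) p)"

definition avoids :: "nat list \<Rightarrow> nat list \<Rightarrow> bool" where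
  "avoids x p \<longleftrightarrow> \<not> contains x p"

text \<open>Occurrence of the bivincular pattern 132-star: 1-based indices a<b<n with
  x_a < x_(b+1) and x_b = x_(b+1)+1; translated to 0-based indices.\<close>
definition contains_132star :: "nat list \<Rightarrow> bool" where
  "contains_132star x \<longleftrightarrow> (\<exists>a b. a < b \<and> b + 1 < length x \<and>
      x ! a < x ! (b + 1) \<and> x ! b = x ! (b + 1) + 1)"

text \<open>The stack is a list whose head is the top, so the list itself is the
  stack contents read from top to bottom.\<close>
definition stack_ok :: "nat list set \<Rightarrow> nat list \<Rightarrow> bool" where
  "stack_ok T stk \<longleftrightarrow> (\<forall>p\<in>T. avoids stk p)"

text \<open>stack_run T inp stk = output produced from the current state.  The case of a
  rejected push onto an empty stack cannot occur when all patterns in T have length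
  at least 2; there we simply push.\<close>
fun stack_run :: "nat list set \<Rightarrow> nat list \<Rightarrow> nat list \<Rightarrow> nat list" where
  "stack_run T [] stk = stk"
| "stack_run T (a # inp) [] = stack_run T inp [a]"
| "stack_run T (a # inp) (b # stk) =
     (if stack_ok T (a # b # stk) then stack_run T inp (a # b # stk)
      else b # stack_run T (a # inp) stk)"

definition s_T :: "nat list set \<Rightarrow> nat list \<Rightarrow> nat list" where
  "s_T T x = stack_run T x []"

definition s_pair :: "nat list \<Rightarrow> nat list \<Rightarrow> nat list \<Rightarrow> nat list" where
  "s_pair \<sigma> \<tau> = s_T {\<sigma>, \<tau>}"

definition west_s :: "nat list \<Rightarrow> nat list" where
  "west_s = s_T {[2, 1]}"

definition Sort :: "nat \<Rightarrow> nat list \<Rightarrow> nat list \<Rightarrow> nat list set" where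
  "Sort n \<sigma> \<tau> = {x. perm_of n x \<and> west_s (s_pair \<sigma> \<tau> x) = [1..<n+1]}"

end

theory Submission
  imports Defs "HOL-Library.Sublist" "HOL-Library.Multiset"
begin

lemma nths_restrict: "nths xs (N \<inter> {..<length xs}) = nths xs N"
  unfolding nths_def
  by (rule arg_cong[where f="map fst"], rule filter_cong) (auto dest: set_zip_rightD)

lemma contains_iff: "contains x p \<longleftrightarrow> (\<exists>q. subseq q x \<and> order_iso q p)"
proof
  assume "contains x p"
  then obtain I where "order_iso (nths x I) p" unfolding contains_def by blast
  moreover have "subseq (nths x I) x" using subseq_conv_nths by blast
  ultimately show "\<exists>q. subseq q x \<and> order_iso q p" by blast
next
  assume "\<exists>q. subseq q x \<and> order_iso q p"
  then obtain q where q: "subseq q x" "order_iso q p" by blast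
  then obtain N where "q = nths x N" using subseq_conv_nths by blast
  then have "q = nths x (N \<inter> {..<length x})" by (simp add: nths_restrict)
  then show "contains x p" unfolding contains_def using q(2)
    by (metis inf_le2)
qed

lemma subseq_sorted: "subseq xs ys \<Longrightarrow> sorted ys \<Longrightarrow> sorted xs"
proof (induction rule: list_emb.induct)
  case (list_emb_Nil ys)
  then show ?case by simp
next
  case (list_emb_Cons xs ys y)
  then show ?case by simp
next
  case (list_emb_Cons2 x y xs ys)
  then show ?case by (auto elim: list_emb_set)
qed

lemma three_cases: "(\<forall>i<Suc (Suc (Suc 0)). P i) \<longleftrightarrow> P 0 \<and> P (Suc 0) \<and> P (Suc (Suc 0))"
  by (auto simp: less_Suc_eq)
lemma two_cases: "(\<forall>i<Suc (Suc 0). P i) \<longleftrightarrow> P 0 \<and> P (Suc 0)"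
  by (auto simp: less_Suc_eq)
lemma order_iso3: "order_iso [a,b,c] [p1,p2,p3] \<longleftrightarrow>
   ((a<b \<longleftrightarrow> p1<p2) \<and> (b<a \<longleftrightarrow> p2<p1) \<and> (a<c \<longleftrightarrow> p1<p3) \<and> (c<a \<longleftrightarrow> p3<p1)
    \<and> (b<c \<longleftrightarrow> p2<p3) \<and> (c<b \<longleftrightarrow> p3<p2))"
  unfolding order_iso_def by (simp only: length_Cons list.size three_cases nth_Cons_0 nth_Cons_Suc) auto
lemma order_iso2: "order_iso [a,b] [p1,p2] \<longleftrightarrow>
   ((a<b \<longleftrightarrow> p1<p2) \<and> (b<a \<longleftrightarrow> p2<p1))"
  unfolding order_iso_def by (simp only: length_Cons list.size two_cases nth_Cons_0 nth_Cons_Suc) auto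
lemma len3: "length q = 3 \<Longrightarrow> \<exists>a b c. q=[a,b,c]"
  by (auto simp: numeral_3_eq_3 length_Suc_conv)
lemma len2: "length q = 2 \<Longrightarrow> \<exists>a b. q=[a,b]"
  by (auto simp: numeral_2_eq_2 length_Suc_conv)

lemma order_iso_len3:
  assumes "order_iso q [p1,p2,p3::nat]"
  obtains a b c where "q = [a,b,c]" "order_iso [a,b,c] [p1,p2,p3]"
proof -
  have "length q = 3" using assms unfolding order_iso_def by simp
  then obtain a b c where "q = [a,b,c]" using len3 by blast
  then show ?thesis using that assms by blast
qed

lemma order_iso_len2:
  assumes "order_iso q [p1,p2::nat]"
  obtains a b where "q = [a,b]" "order_iso [a,b] [p1,p2]"
proof -
  have "length q = 2" using assms unfolding order_iso_def by simp
  then obtain a b where "q = [a,b]" using len2 by blast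
  then show ?thesis using that assms by blast
qed

section \<open>West's stack\<close>

lemma mset_stack_run: "mset (stack_run T inp stk) = mset inp + mset stk"
  by (induction T inp stk rule: stack_run.induct) auto

lemma west_ok: "sorted (b#stk) \<Longrightarrow> stack_ok {[2,1]} (a#b#stk) \<longleftrightarrow> a \<le> b"
proof
  assume s: "sorted (b#stk)" and ok: "stack_ok {[2,1]} (a#b#stk)"
  show "a \<le> b"
  proof (rule ccontr)
    assume "\<not> a \<le> b"
    then have "order_iso [a,b] [2,1]" by (simp add: order_iso2)
    moreover have "subseq [a,b] (a#b#stk)" by simp
    ultimately have "contains (a#b#stk) [2,1]" using contains_iff by blast
    then show False using ok by (simp add: stack_ok_def avoids_def)
  qed
next
  assume s: "sorted (b#stk)" and ab: "a \<le> b"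
  then have s2: "sorted (a#b#stk)" by (metis sorted2)
  show "stack_ok {[2,1]} (a#b#stk)"
  proof (rule ccontr)
    assume "\<not> stack_ok {[2,1]} (a#b#stk)"
    then have "contains (a#b#stk) [2,1]" by (simp add: stack_ok_def avoids_def)
    then obtain q where q: "subseq q (a#b#stk)" "order_iso q [2,1]" using contains_iff by blast
    obtain u v where uv: "q = [u,v]" "order_iso [u,v] [2,1]" using q(2) by (rule order_iso_len2)
    then have "v < u" by (simp add: order_iso2)
    moreover have "sorted [u,v]" using subseq_sorted[OF _ s2] q(1) uv(1) by blast
    ultimately show False by simp
  qed
qed

lemma west_W1: "sorted stk \<Longrightarrow> sorted inp \<Longrightarrow> sorted (stack_run {[2,1]} inp stk)"
proof (induction "{[2::nat,1]}" inp stk rule: stack_run.induct)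
  case (1 stk)
  then show ?case by simp
next
  case (2 a inp)
  then show ?case by simp
next
  case (3 a inp b stk)
  show ?case
  proof (cases "stack_ok {[2,1]} (a#b#stk)")
    case True
    then have "a \<le> b" using west_ok 3(3) by blast
    then have "sorted (a#b#stk)" using 3(3) by (metis sorted2)
    then show ?thesis using 3 True by simp
  next
    case False
    then have "b < a" using west_ok 3(3) by force
    have IH: "sorted (stack_run {[2,1]} (a#inp) stk)" using 3 False by simp
    have "set (stack_run {[2,1]} (a#inp) stk) = set (a#inp) \<union> set stk"
      using mset_stack_run by (metis set_mset_mset set_mset_union)
    moreover have "\<forall>z\<in>set (a#inp) \<union> set stk. b \<le> z" using \<open>b < a\<close> 3(3,4) by auto
    ultimately show ?thesis using IH False by simp
  qed
qed

lemma west_W2: "sorted (rev D @ stk) \<Longrightarrow>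
   stack_run {[2,1]} (D @ I) stk = stack_run {[2,1]} I (rev D @ stk)"
proof (induction D arbitrary: stk)
  case Nil
  then show ?case by simp
next
  case (Cons d D)
  have s: "sorted (rev D @ d # stk)" using Cons.prems by simp
  have "stack_run {[2,1]} (d # D @ I) stk = stack_run {[2,1]} (D @ I) (d # stk)"
  proof (cases stk)
    case Nil
    then show ?thesis by simp
  next
    case (Cons b stk')
    have "sorted (d # b # stk')" using s Cons by (simp add: sorted_append)
    then have "stack_ok {[2,1]} (d#b#stk')" using west_ok by simp
    then show ?thesis using Cons by simp
  qed
  also have "\<dots> = stack_run {[2,1]} I (rev D @ d # stk)" using Cons.IH s by simp
  finally show ?case by simp
qed

lemma west_dec_inc:
  assumes "sorted (rev D)" "sorted I"
  shows "sorted (west_s (D @ I))"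
  using west_W2[of D "[]" I] west_W1[of "rev D" I] assms
  by (simp add: west_s_def s_T_def)


section \<open>The (132,321)-machine\<close>

lemma sub_nth: "i < length xs \<Longrightarrow> subseq l (drop (Suc i) xs) \<Longrightarrow> m \<le> i \<Longrightarrow>
   subseq (xs!i # l) (drop m xs)"
proof -
  assume a: "i < length xs" "subseq l (drop (Suc i) xs)" "m \<le> i"
  have "drop i xs = xs!i # drop (Suc i) xs" using a(1) by (simp add: Cons_nth_drop_Suc)
  then have 1: "subseq (xs!i # l) (drop i xs)" using a(2) by simp
  have "drop i xs = drop (i - m) (drop m xs)" using a(3) by simp
  then have "suffix (drop i xs) (drop m xs)" by (metis suffix_drop)
  then have "subseq (drop i xs) (drop m xs)" by blast
  then show ?thesis using 1 by (metis subseq_order.order_trans)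
qed

lemma sub3: "h < i \<Longrightarrow> i < j \<Longrightarrow> j < length xs \<Longrightarrow> subseq [xs!h, xs!i, xs!j] xs"
proof -
  assume a: "h < i" "i < j" "j < length xs"
  have "subseq [xs!j] (drop (Suc i) xs)" using sub_nth[of j xs "[]" "Suc i"] a by simp
  then have "subseq [xs!i, xs!j] (drop (Suc h) xs)" using sub_nth[of i xs _ "Suc h"] a by simp
  then have "subseq [xs!h, xs!i, xs!j] (drop 0 xs)" using sub_nth[of h xs _ 0] a by simp
  then show ?thesis by simp
qed

lemma contains123I: "h < i \<Longrightarrow> i < j \<Longrightarrow> j < length xs \<Longrightarrow> xs!h < xs!i \<Longrightarrow> xs!i < xs!j
  \<Longrightarrow> contains xs [1,2,3]"
  unfolding contains_iff
  by (rule exI[of _ "[xs!h, xs!i, xs!j]"]) (auto simp: sub3 order_iso3)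

abbreviation T2 :: "nat list set" where "T2 \<equiv> {[1,3,2],[3,2,1]}"

lemma push_ok: "sorted L \<Longrightarrow> stack_ok T2 (a # L)"
proof -
  assume sL: "sorted L"
  have "\<not> contains (a#L) p" if p: "p = [1,3,2] \<or> p = [3,2,1]" for p
  proof
    assume "contains (a#L) p"
    then obtain q where q: "subseq q (a#L)" "order_iso q p" using contains_iff by blast
    have "\<exists>u v w. q = [u,v,w] \<and> w < v"
    proof (cases "p = [1,3,2]")
      case True
      then obtain u v w where "q = [u,v,w]" "order_iso [u,v,w] [1,3,2]"
        using q(2) order_iso_len3 by metis
      then show ?thesis by (auto simp: order_iso3)
    next
      case False
      then have "p = [3,2,1]" using p by blast
      then obtain u v w where "q = [u,v,w]" "order_iso [u,v,w] [3,2,1]"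
        using q(2) order_iso_len3 by metis
      then show ?thesis by (auto simp: order_iso3)
    qed
    then obtain u v w where uvw: "q = [u,v,w]" "w < v" by blast
    have "subseq [v,w] L"
    proof (cases "u = a")
      case True
      then show ?thesis using q(1) uvw(1) by (auto dest: subseq_Cons')
    next
      case False
      then have "subseq [u,v,w] L" using q(1) uvw(1) by simp
      then show ?thesis by (rule subseq_Cons')
    qed
    then have "sorted [v,w]" using subseq_sorted sL by blast
    then show False using uvw(2) by simp
  qed
  then show ?thesis unfolding stack_ok_def avoids_def by blast
qed

lemma pop_ok: "s \<in> set S \<Longrightarrow> (a < s \<and> s < t) \<or> (s < t \<and> t < a) \<Longrightarrow> \<not> stack_ok T2 (a#t#S)"
proof -
  assume s: "s \<in> set S" and c: "(a < s \<and> s < t) \<or> (s < t \<and> t < a)"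
  have sub: "subseq [a,t,s] (a#t#S)" using s by (simp add: subseq_singleton_left)
  show ?thesis
  proof (cases "a < s \<and> s < t")
    case True
    then have "order_iso [a,t,s] [1,3,2]" by (auto simp: order_iso3)
    then have "contains (a#t#S) [1,3,2]" using sub contains_iff by blast
    then show ?thesis by (simp add: stack_ok_def avoids_def)
  next
    case False
    then have "s < t \<and> t < a" using c by blast
    then have "order_iso [a,t,s] [3,2,1]" by (auto simp: order_iso3)
    then have "contains (a#t#S) [3,2,1]" using sub contains_iff by blast
    then show ?thesis by (simp add: stack_ok_def avoids_def)
  qed
qed

definition lrm :: "nat list \<Rightarrow> nat \<Rightarrow> bool" where
  "lrm x i \<longleftrightarrow> (\<forall>j<i. x!i < x!j)"

definition Sk :: "nat list \<Rightarrow> nat \<Rightarrow> nat list" where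
  "Sk x k = rev (map (nth x) (filter (lrm x) [0..<k]))"

definition outk :: "nat list \<Rightarrow> nat \<Rightarrow> nat list" where
  "outk x k = map (nth x) (filter (\<lambda>i. \<not> lrm x i) [k..<length x]) @ Sk x (length x)"

lemma lrm0: "lrm x 0" by (simp add: lrm_def)

lemma Sk_Suc: "Sk x (Suc k) = (if lrm x k then x!k # Sk x k else Sk x k)"
  by (simp add: Sk_def)

lemma Sk_0: "Sk x 0 = []" by (simp add: Sk_def)

lemma set_Sk: "set (Sk x k) = {x!i | i. i<k \<and> lrm x i}"
  by (auto simp: Sk_def)

lemma sorted_Sk: "sorted (Sk x k)"
proof (induction k)
  case 0
  then show ?case by (simp add: Sk_def)
next
  case (Suc k)
  have "\<forall>z\<in>set (Sk x k). x!k \<le> z" if "lrm x k"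
    using that by (auto simp: set_Sk lrm_def less_imp_le)
  then show ?case using Suc by (simp add: Sk_Suc)
qed

lemma outk_Suc: "k < length x \<Longrightarrow>
  outk x k = (if lrm x k then outk x (Suc k) else x!k # outk x (Suc k))"
  by (simp add: outk_def upt_conv_Cons)

lemma outk_end: "outk x (length x) = Sk x (length x)"
  by (simp add: outk_def)

lemma sorted_wrt_filter_upt:
  "(\<And>i j. m \<le> i \<Longrightarrow> i < j \<Longrightarrow> j < n \<Longrightarrow> P i \<Longrightarrow> P j \<Longrightarrow> R (f i) (f j)) \<Longrightarrow>
   sorted_wrt R (map f (filter P [m..<n]))"
proof (induction n)
  case 0
  then show ?case by simp
next
  case (Suc n)
  have IH: "sorted_wrt R (map f (filter P [m..<n]))" using Suc by simp
  show ?case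
  proof (cases "m \<le> n")
    case True
    then show ?thesis using IH Suc.prems by (auto simp: sorted_wrt_append)
  next
    case False
    then show ?thesis by simp
  qed
qed

lemma lrm_below: "\<exists>i\<le>j. lrm x i \<and> x!i \<le> x!j"
proof (induction j rule: less_induct)
  case (less j)
  show ?case
  proof (cases "lrm x j")
    case True
    then show ?thesis by blast
  next
    case False
    then obtain j' where "j' < j" "x!j' \<le> x!j" unfolding lrm_def by auto
    then show ?thesis using less[of j'] by (meson le_trans less_imp_le)
  qed
qed

context
  fixes x :: "nat list" and n :: nat
  assumes perm: "perm_of n x"
    and av: "avoids x [1,2,3]"
    and ns: "\<not> contains_132star x"
begin

lemma dist: "distinct x" using perm by (simp add: perm_of_def)

lemma neq_nth: "i < length x \<Longrightarrow> j < length x \<Longrightarrow> i \<noteq> j \<Longrightarrow> x!i \<noteq> x!j"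
  using dist by (simp add: nth_eq_iff_index_eq)

lemma no123: "h < i \<Longrightarrow> i < j \<Longrightarrow> j < length x \<Longrightarrow> x!h < x!i \<Longrightarrow> x!i < x!j \<Longrightarrow> False"
  using contains123I av by (auto simp: avoids_def)

lemma nonlrm_smaller: "i < length x \<Longrightarrow> \<not> lrm x i \<Longrightarrow> \<exists>h<i. x!h < x!i"
proof -
  assume a: "i < length x" "\<not> lrm x i"
  then obtain h where h: "h < i" "x!h \<le> x!i" unfolding lrm_def by auto
  then have "x!h \<noteq> x!i" using neq_nth a(1) by simp
  then show ?thesis using h by (meson order.not_eq_order_implies_strict)
qed

lemma F1: "i < j \<Longrightarrow> j < length x \<Longrightarrow> \<not> lrm x i \<Longrightarrow> \<not> lrm x j \<Longrightarrow> x!j < x!i"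
proof -
  assume a: "i < j" "j < length x" "\<not> lrm x i" "\<not> lrm x j"
  have "i < length x" using a by simp
  then obtain h where h: "h < i" "x!h < x!i" using nonlrm_smaller a(3) by blast
  have "x!i \<noteq> x!j" using neq_nth a by simp
  moreover have "\<not> x!i < x!j" using no123[OF h(1) a(1) a(2) h(2)] by blast
  ultimately show ?thesis by simp
qed

lemma K: "k < length x \<Longrightarrow> 0 < k \<Longrightarrow> \<not> lrm x (k-1) \<Longrightarrow> x!k < x!(k-1) \<Longrightarrow>
  \<exists>i<k. lrm x i \<and> x!k < x!i \<and> x!i < x!(k-1)"
proof -
  assume k: "k < length x" "0 < k" "\<not> lrm x (k-1)" "x!k < x!(k-1)"
  have k1: "k - 1 < length x" using k by simp
  show ?thesis
  proof (cases "lrm x k")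
    case True
    obtain j where j: "j < k-1" "x!j < x!(k-1)" using nonlrm_smaller[OF k1 k(3)] by blast
    obtain i where i: "i \<le> j" "lrm x i" "x!i \<le> x!j" using lrm_below by blast
    have "i < k" using i j by simp
    then have "x!k < x!i" using True by (simp add: lrm_def)
    moreover have "x!i < x!(k-1)" using i j by simp
    ultimately show ?thesis using \<open>i < k\<close> i by blast
  next
    case False
    obtain j where j: "j < k" "x!j < x!k" using nonlrm_smaller[OF k(1) False] by blast
    have jk1: "j \<noteq> k - 1" using j k by auto
    have ne: "x!(k-1) \<noteq> x!k + 1"
    proof
      assume e: "x!(k-1) = x!k + 1"
      have "j < k - 1" using j jk1 by simp
      moreover have "k - 1 + 1 < length x" using k by simp
      moreover have "x!j < x!(k-1+1)" using j k by simp
      moreover have "x!(k-1) = x!(k-1+1) + 1" using e k by simp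
      ultimately have "contains_132star x" unfolding contains_132star_def by blast
      then show False using ns by simp
    qed
    have tin: "x!(k-1) \<in> {1..n}" using perm k1 by (metis perm_of_def nth_mem)
    have ain: "x!k \<in> {1..n}" using perm k by (metis perm_of_def nth_mem)
    have "x!k + 1 \<in> set x" using tin ain ne k(4) perm by (auto simp: perm_of_def)
    then obtain p where p: "p < length x" "x!p = x!k + 1" by (metis in_set_conv_nth)
    have "\<not> k < p"
    proof
      assume "k < p"
      then show False using no123[OF j(1) _ p(1) j(2)] p by simp
    qed
    moreover have "p \<noteq> k" using p by auto
    moreover have "p \<noteq> k - 1" using p ne by auto
    ultimately have pk: "p < k - 1" by simp
    show ?thesis
    proof (cases "lrm x p")
      case True
      then show ?thesis using pk p ne k(4) by (intro exI[of _ p]) auto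
    next
      case False
      have "x!(k-1) < x!p" using F1[OF pk k1 False k(3)] .
      then show ?thesis using p ne k(4) by simp
    qed
  qed
qed

lemma drop_Cons_info: "drop k x = a # inp \<Longrightarrow> k < length x \<and> x!k = a \<and> drop (Suc k) x = inp"
proof -
  assume d: "drop k x = a # inp"
  then have "k < length x" by (metis drop_all list.distinct(1) not_le_imp_less)
  then have "drop k x = x!k # drop (Suc k) x" by (simp add: Cons_nth_drop_Suc)
  then show ?thesis using d \<open>k < length x\<close> by simp
qed

lemma main: "inp = drop k x \<Longrightarrow> k \<le> length x \<Longrightarrow>
  (stk = Sk x k \<and> k0 = k) \<or> (0 < k \<and> \<not> lrm x (k-1) \<and> stk = x!(k-1) # Sk x k \<and> k0 = k-1) \<Longrightarrow>
  stack_run T2 inp stk = outk x k0"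
proof (induction T2 inp stk arbitrary: k k0 rule: stack_run.induct)
  case (1 stk)
  then have kn: "k = length x" by simp
  show ?case
  proof (cases "stk = Sk x k \<and> k0 = k")
    case True
    then show ?thesis using kn outk_end by simp
  next
    case False
    then have c: "0 < k \<and> \<not> lrm x (k-1) \<and> stk = x!(k-1) # Sk x k \<and> k0 = k-1" using 1 by blast
    then have "outk x (k-1) = x!(k-1) # outk x k" using outk_Suc[of "k-1"] kn by simp
    then show ?thesis using c kn outk_end by simp
  qed
next
  case (2 a inp)
  have d: "k < length x" "x!k = a" "drop (Suc k) x = inp" using drop_Cons_info 2(2) by metis+
  have e: "Sk x k = []" "k0 = k" using 2(4) by auto
  have k0: "k = 0"
  proof (rule ccontr)
    assume "k \<noteq> 0"
    then have "x!0 \<in> set (Sk x k)" using lrm0 by (auto simp: set_Sk)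
    then show False using e by simp
  qed
  have "[a] = Sk x 1" using d k0 by (simp add: Sk_Suc Sk_0 lrm0)
  then have "stack_run T2 inp [a] = outk x 1" using 2(1)[of 1 1] d k0 by simp
  moreover have "outk x 0 = outk x 1" using outk_Suc[of 0] lrm0 d k0 by simp
  ultimately show ?case using e k0 by simp
next
  case (3 a inp b stk)
  have d: "k < length x" "x!k = a" "drop (Suc k) x = inp" using drop_Cons_info 3(3) by metis+
  show ?case
  proof (cases "b # stk = Sk x k \<and> k0 = k")
    case True
    have ok: "stack_ok T2 (a#b#stk)" using push_ok sorted_Sk True by metis
    have "stack_run T2 inp (a#b#stk) = outk x k"
    proof (cases "lrm x k")
      case True
      then have "a # b # stk = Sk x (Suc k)" using \<open>b # stk = Sk x k \<and> k0 = k\<close> d by (simp add: Sk_Suc)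
      then have "stack_run T2 inp (a#b#stk) = outk x (Suc k)" using 3(1)[OF ok, of "Suc k" "Suc k"] d by simp
      then show ?thesis using outk_Suc[OF d(1)] True by simp
    next
      case False
      then have "a # b # stk = x!(Suc k - 1) # Sk x (Suc k)" using \<open>b # stk = Sk x k \<and> k0 = k\<close> d by (simp add: Sk_Suc)
      then show ?thesis using 3(1)[OF ok, of "Suc k" k] d False by simp
    qed
    moreover have "stack_run T2 (a#inp) (b#stk) = stack_run T2 inp (a#b#stk)" using ok by simp
    moreover have "k0 = k" using True by simp
    ultimately show ?thesis by simp
  next
    case False
    then have c: "0 < k \<and> \<not> lrm x (k-1) \<and> b # stk = x!(k-1) # Sk x k \<and> k0 = k-1" using 3(5) by blast
    then have bt: "b = x!(k-1)" "stk = Sk x k" by auto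
    have k1: "k - 1 < length x" using d by simp
    have "0 < k" using c by blast
    then have "k \<noteq> k - 1" by simp
    then have "a \<noteq> b" using neq_nth[OF d(1) k1] d(2) bt(1) by simp
    have nok: "\<not> stack_ok T2 (a#b#stk)"
    proof (cases "a < b")
      case True
      then obtain i where i: "i<k" "lrm x i" "a < x!i" "x!i < b"
        using K[OF d(1)] c d bt by auto
      then have "x!i \<in> set stk" using bt by (auto simp: set_Sk)
      then show ?thesis using pop_ok i by blast
    next
      case False
      then have ba: "b < a" using \<open>a \<noteq> b\<close> by simp
      obtain j where j: "j < k-1" "x!j < x!(k-1)" using nonlrm_smaller[OF k1] c by blast
      obtain i where i: "i \<le> j" "lrm x i" "x!i \<le> x!j" using lrm_below by blast
      have "x!i \<in> set stk" using bt i j by (auto simp: set_Sk)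
      moreover have "x!i < b" using i j bt by simp
      ultimately show ?thesis using pop_ok ba by blast
    qed
    have "stack_run T2 (a#inp) stk = outk x k" using 3(2)[OF nok, of k k] 3(3,4) bt by simp
    moreover have "outk x (k-1) = x!(k-1) # outk x k" using outk_Suc[OF k1] c by simp
    ultimately show ?thesis using nok bt c by simp
  qed
qed

lemma s_pair_form: "s_pair [1,3,2] [3,2,1] x = outk x 0"
  using main[of x 0 "[]" 0] by (simp add: s_pair_def s_T_def Sk_0)

end


theorem proposition3p6:
  fixes n :: nat and x :: "nat list"
  assumes "perm_of n x"
    and "avoids x [1, 2, 3]"
    and "\<not> contains_132star x"
  shows "x \<in> Sort n [1, 3, 2] [3, 2, 1]"
proof -
  define D where "D = map (nth x) (filter (\<lambda>i. \<not> lrm x i) [0..<length x])"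
  have y: "s_pair [1,3,2] [3,2,1] x = D @ Sk x (length x)"
    using s_pair_form[OF assms] by (simp add: outk_def D_def)
  have "sorted_wrt (\<lambda>a b. b \<le> a) D"
    unfolding D_def
  proof (rule sorted_wrt_filter_upt)
    fix i j assume "i < j" "j < length x" "\<not> lrm x i" "\<not> lrm x j"
    then show "x!j \<le> x!i" using F1[OF assms] less_imp_le by blast
  qed
  then have sD: "sorted (rev D)" by (simp add: sorted_wrt_rev)
  have sw: "sorted (west_s (s_pair [1,3,2] [3,2,1] x))"
    using west_dec_inc[OF sD sorted_Sk] y by simp
  have m: "mset (west_s (s_pair [1,3,2] [3,2,1] x)) = mset x"
    unfolding west_s_def s_pair_def s_T_def by (simp only: mset_stack_run mset.simps(1) add_0_right)
  have "distinct (west_s (s_pair [1,3,2] [3,2,1] x))"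
    using mset_eq_imp_distinct_iff[OF m] assms(1) unfolding perm_of_def by simp
  moreover have "set (west_s (s_pair [1,3,2] [3,2,1] x)) = {1..n}"
    using mset_eq_setD[OF m] assms(1) unfolding perm_of_def by simp
  ultimately have d1: "distinct (west_s (s_pair [1,3,2] [3,2,1] x))"
    and s1: "set (west_s (s_pair [1,3,2] [3,2,1] x)) = {1..n}"
    by blast+
  have "west_s (s_pair [1,3,2] [3,2,1] x) = [1..<n+1]"
    by (rule sorted_distinct_set_unique[OF sw d1 sorted_upt distinct_upt])
      (unfold s1, auto)
  then show ?thesis using assms(1) by (simp add: Sort_def)
qed

end
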